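(* Let $\Gamma$ be a non-amenable group. If $\Gamma$ has property RD$_p$ for some $p\in[1,2]$, then $r(\Gamma)\ge 1-1/p$. In particular, if $\Gamma$ has property RD (i.e. RD$_2$), then $r(\Gamma)=1/2$.
   Context: For $1\le p<\infty$, $\Gamma$ has property RD$_p$ if there exist a length function $L$ on $\Gamma$ (i.e. $L\colon\Gamma\to[0,\infty)$ with $L(e)=0$, $L(g^{-1})=L(g)$, $L(gh)\le L(g)+L(h)$) and a polynomial $P$ such that $\|a\|_{p\to p}\le P(d)\|a\|_p$ for every $a\in\mathbf{C}[\Gamma]$ and $d\ge0$ such that $a$ is supported in the $L$-ball of radius $d$; here $\|a\|_{p\to p}$ is the operator norm of left convolution by $a$ on $\ell^p(\Gamma)$. For finite symmetric $S$, $\rho(\Gamma,S)=\|\frac1{|S|}\mathbf{1}_S\|_{2\to2}$, and $r(\Gamma)=-\liminf_S\frac{\ln\rho(\Gamma,S)}{\ln|S|}$, the liminf over the directed set of finite symmetric subsets ordered by inclusion ($\liminf_Sf(S)=\sup_S\inf_{S'\supseteq S}f(S')$). *)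

theory Defs
  imports "HOL-Analysis.Analysis" "HOL-Computational_Algebra.Polynomial"
begin

text \<open>The discrete group Gamma is the type 'a of class group_add; the group
operation is written additively (+, 0, unary minus), no commutativity assumed.
Elements of the group ring C[Gamma] are finitely supported functions 'a => complex.\<close>

definition supp :: "('a \<Rightarrow> complex) \<Rightarrow> 'a set" where
  "supp a = {g. a g \<noteq> 0}"

definition conv :: "('a::group_add \<Rightarrow> complex) \<Rightarrow> ('a \<Rightarrow> complex) \<Rightarrow> 'a \<Rightarrow> complex" where
  "conv a f x = (\<Sum>g\<in>supp a. a g * f (- g + x))"

definition in_lp :: "real \<Rightarrow> ('a \<Rightarrow> complex) \<Rightarrow> bool" where
  "in_lp p f \<longleftrightarrow> (\<lambda>x. norm (f x) powr p) summable_on UNIV"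

definition lp_norm :: "real \<Rightarrow> ('a \<Rightarrow> complex) \<Rightarrow> real" where
  "lp_norm p f = (\<Sum>\<^sub>\<infinity>x. norm (f x) powr p) powr (1 / p)"

definition op_norm :: "real \<Rightarrow> ('a::group_add \<Rightarrow> complex) \<Rightarrow> real" where
  "op_norm p a = Sup {lp_norm p (conv a f) | f. in_lp p f \<and> lp_norm p f \<le> 1}"

definition length_function :: "('a::group_add \<Rightarrow> real) \<Rightarrow> bool" where
  "length_function L \<longleftrightarrow> (\<forall>g. L g \<ge> 0) \<and> L 0 = 0 \<and> (\<forall>g. L (- g) = L g) \<and>
     (\<forall>g h. L (g + h) \<le> L g + L h)"

definition has_RD :: "real \<Rightarrow> 'a::group_add itself \<Rightarrow> bool" where
  "has_RD p _ \<longleftrightarrow> (\<exists>(L::'a \<Rightarrow> real) (P::real poly). length_function L \<and>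
     (\<forall>(a::'a \<Rightarrow> complex) d. finite (supp a) \<and> d \<ge> 0 \<and> supp a \<subseteq> {g. L g \<le> d} \<longrightarrow>
        op_norm p a \<le> poly P d * lp_norm p a))"

definition finite_symmetric :: "'a::group_add set \<Rightarrow> bool" where
  "finite_symmetric S \<longleftrightarrow> finite S \<and> (\<forall>g\<in>S. - g \<in> S)"

definition rho :: "'a::group_add set \<Rightarrow> real" where
  "rho S = op_norm 2 (\<lambda>g. if g \<in> S then complex_of_real (1 / real (card S)) else 0)"

text \<open>r(Gamma) = - liminf_S ln rho(S) / ln |S| over the directed set of finite
symmetric subsets ordered by inclusion; liminf_S f = sup_S inf_{S' \<supseteq> S} f(S').\<close>
definition r_exponent :: "'a::group_add itself \<Rightarrow> ereal" where
  "r_exponent _ = - (SUP S\<in>{S::'a set. finite_symmetric S}.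
        INF S'\<in>{S'. finite_symmetric S' \<and> S \<subseteq> S'}.
          ereal (ln (rho S') / ln (real (card S'))))"

definition amenable :: "'a::group_add itself \<Rightarrow> bool" where
  "amenable _ \<longleftrightarrow> (\<exists>m :: ('a \<Rightarrow> real) \<Rightarrow> real.
     (\<forall>f g. bounded (range f) \<and> bounded (range g) \<longrightarrow> m (\<lambda>x. f x + g x) = m f + m g) \<and>
     (\<forall>f c. bounded (range f) \<longrightarrow> m (\<lambda>x. c * f x) = c * m f) \<and>
     (\<forall>f. bounded (range f) \<and> (\<forall>x. f x \<ge> 0) \<longrightarrow> m f \<ge> 0) \<and>
     m (\<lambda>_. 1) = 1 \<and>
     (\<forall>f h. bounded (range f) \<longrightarrow> m (\<lambda>x. f (h + x)) = m f))"

end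

theory Submission
  imports Defs
begin

definition ultra :: "'a filter \<Rightarrow> bool" where
  "ultra U \<longleftrightarrow> U \<noteq> bot \<and> (\<forall>P. eventually P U \<or> eventually (\<lambda>x. \<not> P x) U)"

lemma ultra_exists:
  fixes F :: "'a filter"
  assumes F: "F \<noteq> bot"
  shows "\<exists>U\<le>F. ultra U"
proof -
  define R where "R = {(b, a). a \<noteq> (bot::'a filter) \<and> a \<le> b \<and> b \<le> F}"
  have fieldR: "Field R = {G. G \<noteq> bot \<and> G \<le> F}"
    unfolding R_def by (auto simp: Field_def bot_unique)
  have po: "Partial_order R"
    unfolding R_def by (auto simp: partial_order_on_def preorder_on_def
          antisym_def refl_on_def trans_def Field_def bot_unique)
  have "\<exists>m\<in>Field R. \<forall>a\<in>Field R. (m, a) \<in> R \<longrightarrow> a = m"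
  proof (rule Zorns_po_lemma[OF po])
    fix C assume C: "C \<in> Chains R"
    have ch: "\<And>x y. x \<in> C \<Longrightarrow> y \<in> C \<Longrightarrow> x \<le> y \<or> y \<le> x"
      using C unfolding Chains_def R_def by auto
    have nb: "\<And>x. x \<in> C \<Longrightarrow> x \<noteq> bot \<and> x \<le> F"
      using C unfolding Chains_def R_def by auto
    show "\<exists>u\<in>Field R. \<forall>a\<in>C. (a, u) \<in> R"
    proof (cases "C = {}")
      case True
      then show ?thesis using F unfolding fieldR by (auto intro!: bexI[of _ F])
    next
      case False
      have "Inf C \<noteq> bot"
      proof
        assume "Inf C = bot"
        then have "eventually (\<lambda>_. False) (Inf C)" by simp
        then have "\<exists>b\<in>C. eventually (\<lambda>_. False) b"
          by (subst (asm) eventually_Inf_base) (use False ch in auto)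
        then show False using nb by (auto simp: trivial_limit_def)
      qed
      moreover from False obtain x where "x \<in> C" by auto
      then have "Inf C \<le> F" using nb by (meson Inf_lower order_trans)
      ultimately show ?thesis unfolding fieldR
        by (intro bexI[of _ "Inf C"]) (auto simp: R_def nb Inf_lower)
    qed
  qed
  then obtain U where U0: "U \<in> Field R" and mx0: "\<forall>a\<in>Field R. (U, a) \<in> R \<longrightarrow> a = U" by blast
  have U: "U \<noteq> bot" "U \<le> F" using U0 unfolding fieldR by auto
  have mx: "G = U" if "G \<noteq> bot" "G \<le> U" for G
  proof -
    have "G \<in> Field R" using that U unfolding fieldR by auto
    moreover have "(U, G) \<in> R" using that U unfolding R_def by auto
    ultimately show ?thesis using mx0 by blast
  qed
  have "ultra U"
    unfolding ultra_def
  proof (intro conjI allI U(1))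
    fix P
    show "eventually P U \<or> eventually (\<lambda>x. \<not> P x) U"
    proof (rule disjCI)
      assume "\<not> eventually (\<lambda>x. \<not> P x) U"
      then have "inf U (principal {x. P x}) \<noteq> bot"
        by (simp add: trivial_limit_def eventually_inf_principal)
      then have eq: "inf U (principal {x. P x}) = U"
        by (rule mx) simp
      have "eventually P (inf U (principal {x. P x}))"
        by (simp add: eventually_inf_principal)
      then show "eventually P U" by (simp only: eq)
    qed
  qed
  then show ?thesis using U by auto
qed

lemma ultra_limit:
  fixes x :: "'b \<Rightarrow> real"
  assumes U: "ultra U" and B: "\<And>n. \<bar>x n\<bar> \<le> M"
  shows "\<exists>l. (x \<longlongrightarrow> l) U"
proof -
  have cpt: "compact {-M..M}" by simp
  have ev: "eventually (\<lambda>y. y \<in> {-M..M}) (filtermap x U)"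
    using B by (auto simp: eventually_filtermap abs_le_iff intro!: always_eventually) (metis minus_le_iff)
  have nb: "filtermap x U \<noteq> bot" using U by (simp add: ultra_def filtermap_bot_iff)
  obtain l where l: "inf (nhds l) (filtermap x U) \<noteq> bot"
    using cpt[unfolded compact_filter] nb ev by blast
  have "(x \<longlongrightarrow> l) U"
    unfolding tendsto_def
  proof (intro allI impI)
    fix S :: "real set" assume S: "open S" "l \<in> S"
    show "eventually (\<lambda>n. x n \<in> S) U"
    proof (rule ccontr)
      assume "\<not> eventually (\<lambda>n. x n \<in> S) U"
      then have "eventually (\<lambda>n. x n \<notin> S) U" using U by (auto simp: ultra_def)
      then have e1: "eventually (\<lambda>y. y \<notin> S) (filtermap x U)" by (simp add: eventually_filtermap)
      have e2: "eventually (\<lambda>y. y \<in> S) (nhds l)" using S by (rule eventually_nhds_in_open)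
      have "eventually (\<lambda>_. False) (inf (nhds l) (filtermap x U))"
        unfolding eventually_inf
        by (rule exI[of _ "\<lambda>y. y \<in> S"], rule exI[of _ "\<lambda>y. y \<notin> S"]) (use e1 e2 in auto)
      then show False using l by (simp add: trivial_limit_def)
    qed
  qed
  then show ?thesis ..
qed


lemma bounded_range_abs:
  fixes f :: "'a \<Rightarrow> real"
  assumes "bounded (range f)"
  obtains M where "M \<ge> 0" "\<And>x. \<bar>f x\<bar> \<le> M"
proof -
  from assms obtain M where "\<And>x. norm (f x) \<le> M" by (auto simp: bounded_iff)
  then show ?thesis using that[of M] by (metis abs_ge_zero order_trans real_norm_def)
qed

lemma translate_sum_diff:
  fixes F :: "'a::group_add set" and f :: "'a \<Rightarrow> real"
  assumes fin: "finite F" and M: "\<And>x. \<bar>f x\<bar> \<le> M"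
  shows "\<bar>(\<Sum>x\<in>F. f (h + x)) - (\<Sum>x\<in>F. f x)\<bar> \<le> 2 * M * real (card (((+) h) ` F - F))"
proof -
  define G where "G = ((+) h) ` F"
  have inj: "inj_on ((+) h) F" by (auto simp: inj_on_def)
  have s1: "(\<Sum>x\<in>F. f (h + x)) = (\<Sum>y\<in>G. f y)"
    unfolding G_def by (subst sum.reindex[OF inj]) (simp add: o_def)
  have finG: "finite G" using fin by (simp add: G_def)
  have cG: "card G = card F" unfolding G_def using card_image[OF inj] .
  have a: "(\<Sum>y\<in>G. f y) = (\<Sum>y\<in>G \<inter> F. f y) + (\<Sum>y\<in>G - F. f y)"
    using finG by (metis Diff_Diff_Int Diff_subset sum.subset_diff inf_commute sum.union_disjoint
        Int_Diff_disjoint Int_Diff_Un finite_Diff finite_Int)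
  have b: "(\<Sum>y\<in>F. f y) = (\<Sum>y\<in>G \<inter> F. f y) + (\<Sum>y\<in>F - G. f y)"
    using fin by (metis Int_Diff_Un Int_Diff_disjoint finite_Diff finite_Int inf_commute sum.union_disjoint)
  have c1: "card (G - F) = card G - card (G \<inter> F)" using finG by (simp add: card_Diff_subset_Int inf_commute)
  have c2: "card (F - G) = card F - card (G \<inter> F)" using fin by (simp add: card_Diff_subset_Int inf_commute)
  have cc: "card (F - G) = card (G - F)" using c1 c2 cG by simp
  have d1: "\<bar>\<Sum>y\<in>G - F. f y\<bar> \<le> M * card (G - F)"
    using order_trans[OF sum_abs sum_bounded_above[of "G - F" "\<lambda>y. \<bar>f y\<bar>" M]] M by (simp add: mult.commute)
  have d2: "\<bar>\<Sum>y\<in>F - G. f y\<bar> \<le> M * card (G - F)"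
    using order_trans[OF sum_abs sum_bounded_above[of "F - G" "\<lambda>y. \<bar>f y\<bar>" M]] M cc by (simp add: mult.commute)
  show ?thesis unfolding s1 a b using d1 d2 unfolding G_def by linarith
qed

lemma amenable_folner:
  fixes F :: "nat \<Rightarrow> 'a::group_add set"
  assumes fin: "\<And>n. finite (F n)" and ne: "\<And>n. F n \<noteq> {}"
    and fol: "\<And>h. ((\<lambda>n. real (card (((+) h) ` F n - F n)) / real (card (F n))) \<longlongrightarrow> 0) sequentially"
  shows "amenable TYPE('a)"
proof -
  obtain U :: "nat filter" where U: "U \<le> sequentially" "ultra U"
    using ultra_exists[of sequentially] by auto
  have Unb: "\<not> trivial_limit U" using U(2) by (simp add: ultra_def)
  define A where "A f n = (\<Sum>x\<in>F n. f x) / real (card (F n))" for f :: "'a \<Rightarrow> real" and n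
  define m where "m f = Lim U (A f)" for f
  have cpos: "real (card (F n)) > 0" for n using fin ne by (simp add: card_gt_0_iff)
  have Abd: "\<bar>A f n\<bar> \<le> M" if "\<And>x. \<bar>f x\<bar> \<le> M" for f M n
  proof -
    have "\<bar>\<Sum>x\<in>F n. f x\<bar> \<le> M * card (F n)"
      using order_trans[OF sum_abs sum_bounded_above[of "F n" "\<lambda>y. \<bar>f y\<bar>" M]] that
      by (simp add: mult.commute)
    then show ?thesis using cpos[of n] by (simp add: A_def abs_div pos_divide_le_eq)
  qed
  have lim: "(A f \<longlongrightarrow> m f) U" if bfr: "bounded (range f)" for f
  proof -
    obtain M where "M \<ge> 0" "\<And>x. \<bar>f x\<bar> \<le> M" using bounded_range_abs[OF bfr] by blast
    then obtain l where "(A f \<longlongrightarrow> l) U" using ultra_limit[OF U(2), of "A f" M] Abd by blast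
    then show ?thesis unfolding m_def using tendsto_Lim[OF Unb] by metis
  qed
  have mlim: "m f = l" if "(A f \<longlongrightarrow> l) U" for f l
    unfolding m_def using tendsto_Lim[OF Unb that] .
  have "\<exists>m :: ('a \<Rightarrow> real) \<Rightarrow> real.
     (\<forall>f g. bounded (range f) \<and> bounded (range g) \<longrightarrow> m (\<lambda>x. f x + g x) = m f + m g) \<and>
     (\<forall>f c. bounded (range f) \<longrightarrow> m (\<lambda>x. c * f x) = c * m f) \<and>
     (\<forall>f. bounded (range f) \<and> (\<forall>x. f x \<ge> 0) \<longrightarrow> m f \<ge> 0) \<and>
     m (\<lambda>_. 1) = 1 \<and>
     (\<forall>f h. bounded (range f) \<longrightarrow> m (\<lambda>x. f (h + x)) = m f)"
  proof (intro exI[of _ m] conjI allI impI)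
    fix f g :: "'a \<Rightarrow> real" assume fg: "bounded (range f) \<and> bounded (range g)"
    have "A (\<lambda>x. f x + g x) = (\<lambda>n. A f n + A g n)"
      by (simp add: A_def fun_eq_iff sum.distrib add_divide_distrib)
    then have "(A (\<lambda>x. f x + g x) \<longlongrightarrow> m f + m g) U"
      using tendsto_add[OF lim lim] fg by simp
    then show "m (\<lambda>x. f x + g x) = m f + m g" by (rule mlim)
  next
    fix f :: "'a \<Rightarrow> real" and c assume "bounded (range f)"
    moreover have "A (\<lambda>x. c * f x) = (\<lambda>n. c * A f n)"
      by (simp add: A_def fun_eq_iff sum_distrib_left)
    ultimately have "(A (\<lambda>x. c * f x) \<longlongrightarrow> c * m f) U"
      using tendsto_mult[OF tendsto_const lim, of f c] by simp
    then show "m (\<lambda>x. c * f x) = c * m f" by (rule mlim)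
  next
    fix f :: "'a \<Rightarrow> real" assume a: "bounded (range f) \<and> (\<forall>x. f x \<ge> 0)"
    have "eventually (\<lambda>n. A f n \<ge> 0) U"
      using a by (auto simp: A_def intro!: always_eventually divide_nonneg_nonneg sum_nonneg)
    then show "m f \<ge> 0" using tendsto_lowerbound[OF lim[of f] _ Unb] a by blast
  next
    have "A (\<lambda>_. 1) = (\<lambda>_. 1)" using cpos by (auto simp: A_def fun_eq_iff)
    then show "m (\<lambda>_. 1) = 1" using mlim[of "\<lambda>_. 1" 1] by simp
  next
    fix f :: "'a \<Rightarrow> real" and h assume bf: "bounded (range f)"
    obtain M where M: "M \<ge> 0" "\<And>x. \<bar>f x\<bar> \<le> M" using bounded_range_abs[OF bf] by blast
    define r where "r n = real (card (((+) h) ` F n - F n)) / real (card (F n))" for n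
    have d: "\<bar>A (\<lambda>x. f (h + x)) n - A f n\<bar> \<le> 2 * M * r n" for n
    proof -
      have "\<bar>A (\<lambda>x. f (h + x)) n - A f n\<bar> = \<bar>(\<Sum>x\<in>F n. f (h + x)) - (\<Sum>x\<in>F n. f x)\<bar> / card (F n)"
        by (simp add: A_def diff_divide_distrib[symmetric] abs_div)
      also have "\<dots> \<le> 2 * M * real (card (((+) h) ` F n - F n)) / card (F n)"
        using divide_right_mono[OF translate_sum_diff[of "F n" f M h, OF fin M(2)], of "real (card (F n))"] cpos[of n] by simp
      finally show ?thesis by (simp add: r_def)
    qed
    have "(r \<longlongrightarrow> 0) sequentially" unfolding r_def by (rule fol)
    then have "((\<lambda>n. 2 * M * r n) \<longlongrightarrow> 0) sequentially"
      using tendsto_mult[OF tendsto_const, of r 0 _ "2*M"] by simp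
    then have "((\<lambda>n. A (\<lambda>x. f (h + x)) n - A f n) \<longlongrightarrow> 0) sequentially"
      by (rule Lim_null_comparison[rotated]) (use d in \<open>auto intro: always_eventually\<close>)
    then have "((\<lambda>n. A (\<lambda>x. f (h + x)) n - A f n) \<longlongrightarrow> 0) U"
      using tendsto_mono[OF U(1)] by blast
    then have "((\<lambda>n. A f n - A (\<lambda>x. f (h + x)) n) \<longlongrightarrow> 0) U"
      using tendsto_minus by fastforce
    then have "(A (\<lambda>x. f (h + x)) \<longlongrightarrow> m f) U"
      using Lim_transform2[OF lim[OF bf]] by blast
    then show "m (\<lambda>x. f (h + x)) = m f" by (rule mlim)
  qed
  then show ?thesis unfolding amenable_def by blast
qed


lemma poly_exp:
  fixes q C A n k :: real
  assumes q: "q > 1" and n: "n > 0" and A: "A \<ge> 1" and C: "C > 0" and k: "k \<ge> 0"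
  obtains j :: nat where "C * (A + real j * n) powr k < q ^ j"
proof -
  define e where "e = ln q / (2 * (k + 1) * n)"
  have lq: "ln q > 0" using q by simp
  have e: "e > 0" unfolding e_def using lq n k by simp
  have "eventually (\<lambda>x. \<bar>ln x / x - 0\<bar> < e) at_top"
    using ln_x_over_x_tendsto_0 e by (simp add: tendsto_iff dist_real_def)
  then obtain X where X: "\<And>x. x \<ge> X \<Longrightarrow> \<bar>ln x / x\<bar> < e"
    by (auto simp: eventually_at_top_linorder)
  obtain j :: nat where j: "real j > max (X / n) (2 * \<bar>ln C\<bar> / ln q + A / n + 1)"
    using reals_Archimedean2 by blast
  define x where "x = A + real j * n"
  have x1: "x \<ge> 1" unfolding x_def using A n by (simp add: add_increasing2)
  have xX: "x \<ge> X"
  proof -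
    have "real j * n > X" using j n by (simp add: pos_divide_less_eq)
    then show ?thesis unfolding x_def using A by linarith
  qed
  have "ln x / x < e" using X[OF xX] by (meson abs_ge_self le_less_trans)
  then have lnx: "ln x \<le> e * x" using x1 by (simp add: divide_less_eq)
  have "k * ln x \<le> k * (e * x)" using lnx k by (simp add: mult_left_mono)
  also have "\<dots> = (k / (k + 1)) * (ln q / 2) * (A / n + real j)"
    unfolding e_def x_def using n k by (simp add: field_simps)
  also have "\<dots> \<le> (ln q / 2) * (A / n + real j)"
  proof -
    have "k / (k + 1) \<le> 1" using k by simp
    moreover have "(ln q / 2) * (A / n + real j) \<ge> 0" using lq A n by simp
    ultimately show ?thesis by (metis mult.assoc mult_left_le_one_le k divide_nonneg_nonneg
          add_nonneg_nonneg zero_le_one)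
  qed
  finally have kl: "k * ln x \<le> (ln q / 2) * (A / n + real j)" .
  have "ln C < (ln q / 2) * (real j - A / n)"
  proof -
    have "real j - A / n > 2 * \<bar>ln C\<bar> / ln q" using j by simp
    then have "(ln q / 2) * (real j - A / n) > (ln q / 2) * (2 * \<bar>ln C\<bar> / ln q)"
      using lq by (intro mult_strict_left_mono) auto
    then show ?thesis using lq by simp
  qed
  then have "ln C + k * ln x < real j * ln q" using kl by (simp add: algebra_simps)
  moreover have "ln (C * x powr k) = ln C + k * ln x"
    using C x1 by (simp add: ln_mult ln_powr)
  moreover have "ln (q ^ j) = real j * ln q" using q by (simp add: ln_realpow)
  ultimately have "ln (C * x powr k) < ln (q ^ j)" by simp
  then have "C * x powr k < q ^ j"
    using C x1 q by (subst (asm) ln_less_cancel_iff) auto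
  then show ?thesis using that unfolding x_def by blast
qed


lemma growth_amenable:
  fixes L :: "'a::group_add \<Rightarrow> real"
  assumes sub: "\<And>g h. L (g + h) \<le> L g + L h" and L0: "L 0 = 0"
    and fin: "\<And>d. finite {g. L g \<le> d}"
    and bd: "\<And>d. d \<ge> d0 \<Longrightarrow> real (card {g. L g \<le> d}) \<le> C * (1 + d) powr k"
    and d0: "d0 \<ge> 0" and C: "C > 0" and k: "k \<ge> 0"
  shows "amenable TYPE('a)"
proof -
  define B where "B d = {g. L g \<le> d}" for d
  have finB: "finite (B d)" for d unfolding B_def by (rule fin)
  have neB: "0 \<in> B d" if "d \<ge> 0" for d using that L0 by (simp add: B_def)
  have cB: "real (card (B d)) \<ge> 1" if "d \<ge> 0" for d
  proof -
    have "card (B d) > 0" using neB[OF that] finB[of d] by (auto simp: card_gt_0_iff)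
    then show ?thesis by simp
  qed
  have monoB: "B d \<subseteq> B d'" if "d \<le> d'" for d d' using that by (auto simp: B_def)
  have step: "\<exists>d\<ge>d0. real (card (B (d + (real m + 1)))) \<le> (1 + 1 / (real m + 1)) * real (card (B d))" for m :: nat
  proof (rule ccontr)
    define n where "n = real m + 1"
    define q where "q = 1 + 1 / n"
    have n: "n > 0" "n \<ge> 1" unfolding n_def by auto
    have q: "q > 1" unfolding q_def using n by simp
    assume nt: "\<not> ?thesis"
    have gt: "real (card (B (d + n))) > q * real (card (B d))" if "d \<ge> d0" for d
    proof -
      from nt that have "\<not> real (card (B (d + (real m + 1)))) \<le> (1 + 1 / (real m + 1)) * real (card (B d))"
        by blast
      then show ?thesis unfolding n_def q_def by simp
    qed
    have grow: "real (card (B (d0 + real j * n))) \<ge> q ^ j" for j :: nat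
    proof (induction j)
      case 0 then show ?case using cB[OF d0] by simp
    next
      case (Suc j)
      have "q ^ Suc j = q * q ^ j" by simp
      also have "\<dots> \<le> q * real (card (B (d0 + real j * n)))"
        using Suc q by (intro mult_left_mono) auto
      also have "\<dots> < real (card (B (d0 + real j * n + n)))"
        using gt[of "d0 + real j * n"] n by simp
      also have "d0 + real j * n + n = d0 + real (Suc j) * n" by (simp add: algebra_simps)
      finally show ?case by simp
    qed
    obtain j :: nat where j: "C * ((1 + d0) + real j * n) powr k < q ^ j"
      using poly_exp[OF q n(1) _ C k, of "1 + d0"] d0 by auto
    have "real (card (B (d0 + real j * n))) \<le> C * (1 + (d0 + real j * n)) powr k"
      unfolding B_def using bd n d0 by simp
    then show False using j grow[of j] by (simp add: add.assoc)
  qed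
  then have "\<exists>d. \<forall>m. d m \<ge> d0 \<and> real (card (B (d m + (real m + 1)))) \<le> (1 + 1 / (real m + 1)) * real (card (B (d m)))"
    by (intro choice allI) blast
  then obtain d where d0': "\<forall>m. d m \<ge> d0 \<and> real (card (B (d m + (real m + 1)))) \<le> (1 + 1 / (real m + 1)) * real (card (B (d m)))"
    by blast
  have d: "\<And>m. d m \<ge> d0"
    "\<And>m. real (card (B (d m + (real m + 1)))) \<le> (1 + 1 / (real m + 1)) * real (card (B (d m)))"
    using d0' by auto
  define F where "F m = B (d m)" for m
  show ?thesis
  proof (rule amenable_folner[of F])
    show "finite (F n)" for n unfolding F_def by (rule finB)
    show "F n \<noteq> {}" for n unfolding F_def using neB[of "d n"] d(1)[of n] d0 by auto
    fix h
    define r where "r m = real (card (((+) h) ` F m - F m)) / real (card (F m))" for m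
    have rb: "\<bar>r m\<bar> \<le> inverse (real (Suc m))" if "real m + 1 \<ge> L h" for m
    proof -
      define n where "n = real m + 1"
      have n0: "n > 0" unfolding n_def by simp
      have hn: "L h \<le> n" using that unfolding n_def by simp
      have sub1: "((+) h) ` F m - F m \<subseteq> B (d m + n) - B (d m)"
      proof
        fix y assume y: "y \<in> ((+) h) ` F m - F m"
        then obtain x where x: "y = h + x" "x \<in> B (d m)" unfolding F_def by blast
        have yn: "y \<notin> B (d m)" using y unfolding F_def by blast
        have "L y \<le> L h + L x" using sub x(1) by simp
        moreover have "L x \<le> d m" using x(2) unfolding B_def by simp
        ultimately have "L y \<le> d m + n" using hn by linarith
        then show "y \<in> B (d m + n) - B (d m)" using yn unfolding B_def by simp
      qed
      have mono1: "B (d m) \<subseteq> B (d m + n)" using monoB n0 by simp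
      have c1: "card (((+) h) ` F m - F m) \<le> card (B (d m + n) - B (d m))"
        by (rule card_mono[OF _ sub1]) (simp add: finB)
      have c2: "card (B (d m + n) - B (d m)) = card (B (d m + n)) - card (B (d m))"
        by (rule card_Diff_subset[OF finB mono1])
      have c3: "card (B (d m)) \<le> card (B (d m + n))"
        by (rule card_mono[OF finB mono1])
      have pos: "real (card (B (d m))) > 0" using cB[of "d m"] d(1)[of m] d0 by simp
      have "real (card (((+) h) ` F m - F m)) \<le> real (card (B (d m + n)) - card (B (d m)))"
        using c1 c2 by simp
      also have "\<dots> = real (card (B (d m + n))) - real (card (B (d m)))"
        using c3 by (rule of_nat_diff)
      also have "\<dots> \<le> (1 / n) * real (card (B (d m)))" using d(2)[of m] unfolding n_def
        by (simp add: algebra_simps)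
      finally have le: "real (card (((+) h) ` F m - F m)) \<le> (1 / n) * real (card (B (d m)))" .
      have "r m \<le> 1 / n" unfolding r_def using le pos unfolding F_def by (simp add: divide_le_eq)
      moreover have "r m \<ge> 0" unfolding r_def by simp
      moreover have "1 / n = inverse (real (Suc m))" unfolding n_def by (simp add: inverse_eq_divide)
      ultimately show ?thesis by simp
    qed
    have ev: "eventually (\<lambda>m. norm (r m) \<le> inverse (real (Suc m))) sequentially"
    proof -
      obtain N :: nat where "real N \<ge> L h" using real_arch_simple by blast
      then show ?thesis using rb by (auto simp: eventually_sequentially intro!: exI[of _ N])
    qed
    show "(r \<longlongrightarrow> 0) sequentially"
      by (rule Lim_null_comparison[OF ev]) (rule LIMSEQ_inverse_real_of_nat)
  qed
qed


definition fsupp :: "('a \<Rightarrow> real) \<Rightarrow> bool" where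
  "fsupp f \<longleftrightarrow> finite {x. f x \<noteq> 0}"

lemma fs_infsum:
  fixes f :: "'a \<Rightarrow> 'b::{comm_monoid_add, t2_space}"
  assumes "finite W" "\<And>x. x \<notin> W \<Longrightarrow> f x = 0"
  shows "infsum f UNIV = sum f W"
proof -
  have "infsum f UNIV = infsum f W" by (rule infsum_cong_neutral) (use assms in auto)
  then show ?thesis using assms by simp
qed

lemma fs_summable:
  fixes f :: "'a \<Rightarrow> 'b::{comm_monoid_add, t2_space}"
  assumes "finite W" "\<And>x. x \<notin> W \<Longrightarrow> f x = 0"
  shows "f summable_on UNIV"
proof -
  have "f summable_on UNIV \<longleftrightarrow> f summable_on W" by (rule summable_on_cong_neutral) (use assms in auto)
  then show ?thesis using assms by simp
qed

lemma fsupp_W: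
  assumes "fsupp f"
  shows "finite {x. f x \<noteq> 0}" "\<And>x. x \<notin> {x. f x \<noteq> 0} \<Longrightarrow> f x = 0"
  using assms by (auto simp: fsupp_def)

lemma fsupp_summable: "fsupp f \<Longrightarrow> f summable_on UNIV"
  by (rule fs_summable[of "{x. f x \<noteq> 0}"]) (auto simp: fsupp_def)

lemma fsupp_sub: "fsupp f \<Longrightarrow> (\<And>x. f x = 0 \<Longrightarrow> g x = 0) \<Longrightarrow> fsupp g"
  unfolding fsupp_def by (erule finite_subset[rotated]) auto

lemma fsupp_mult: "fsupp u \<Longrightarrow> fsupp (\<lambda>x. u x * v x)"
  by (erule fsupp_sub) simp

lemma fsupp_mult2: "fsupp v \<Longrightarrow> fsupp (\<lambda>x. u x * v x)"
  by (erule fsupp_sub) simp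

lemma fsupp_add: "fsupp u \<Longrightarrow> fsupp v \<Longrightarrow> fsupp (\<lambda>x. u x + v x)"
  unfolding fsupp_def by (rule finite_subset[of _ "{x. u x \<noteq> 0} \<union> {x. v x \<noteq> 0}"]) auto

lemma fsupp_sum: "finite I \<Longrightarrow> (\<And>i. i \<in> I \<Longrightarrow> fsupp (f i)) \<Longrightarrow> fsupp (\<lambda>x. \<Sum>i\<in>I. f i x)"
proof (induction I rule: finite_induct)
  case empty then show ?case by (simp add: fsupp_def)
next
  case (insert i I) then show ?case by (simp add: fsupp_add)
qed

lemma fsupp_transl: "fsupp f \<Longrightarrow> fsupp (\<lambda>x. f (c + x))" for f :: "'a::group_add \<Rightarrow> real"
proof -
  assume f: "fsupp f"
  have "{x. f (c + x) \<noteq> 0} = (\<lambda>y. - c + y) ` {y. f y \<noteq> 0}"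
    by (auto simp: image_iff add.assoc[symmetric] intro!: exI[of _ "c + _"])
  then show ?thesis using f unfolding fsupp_def by simp
qed

lemma fsupp_transr: "fsupp f \<Longrightarrow> fsupp (\<lambda>x. f (x + c))" for f :: "'a::group_add \<Rightarrow> real"
proof -
  assume f: "fsupp f"
  have "{x. f (x + c) \<noteq> 0} = (\<lambda>y. y + - c) ` {y. f y \<noteq> 0}"
    by (auto simp: image_iff add.assoc intro!: exI[of _ "_ + c"])
  then show ?thesis using f unfolding fsupp_def by simp
qed

lemma infsum_fsum:
  assumes I: "finite I" and f: "\<And>i. i \<in> I \<Longrightarrow> fsupp (f i)"
  shows "infsum (\<lambda>x. \<Sum>i\<in>I. f i x) UNIV = (\<Sum>i\<in>I. infsum (f i) UNIV)"
proof -
  define W where "W = (\<Union>i\<in>I. {x. f i x \<noteq> 0})"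
  have W: "finite W" unfolding W_def using I f by (auto simp: fsupp_def)
  have z: "f i x = 0" if "i \<in> I" "x \<notin> W" for i x using that by (auto simp: W_def)
  have "infsum (\<lambda>x. \<Sum>i\<in>I. f i x) UNIV = (\<Sum>x\<in>W. \<Sum>i\<in>I. f i x)"
    by (rule fs_infsum[OF W]) (simp add: z)
  also have "\<dots> = (\<Sum>i\<in>I. \<Sum>x\<in>W. f i x)" by (rule sum.swap)
  also have "\<dots> = (\<Sum>i\<in>I. infsum (f i) UNIV)"
    by (rule sum.cong[OF refl], rule fs_infsum[OF W, symmetric]) (simp add: z)
  finally show ?thesis .
qed

lemma infsum_transl: "infsum (\<lambda>x. f (c + x)) UNIV = infsum f (UNIV :: 'a::group_add set)"
proof -
  have "bij_betw (\<lambda>x. c + x) UNIV (UNIV :: 'a set)"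
    by (rule bij_betwI[of _ _ _ "\<lambda>y. - c + y"]) (auto simp: add.assoc[symmetric])
  then show ?thesis by (rule infsum_reindex_bij_betw)
qed

lemma infsum_transr: "infsum (\<lambda>x. f (x + c)) UNIV = infsum f (UNIV :: 'a::group_add set)"
proof -
  have "bij_betw (\<lambda>x. x + c) UNIV (UNIV :: 'a set)"
    by (rule bij_betwI[of _ _ _ "\<lambda>y. y + - c"]) (auto simp: add.assoc)
  then show ?thesis by (rule infsum_reindex_bij_betw)
qed

lemma fsupp_infsum_mono:
  assumes "fsupp f" "fsupp g" "\<And>x. f x \<le> g x"
  shows "infsum f UNIV \<le> infsum g UNIV"
  using infsum_mono[OF fsupp_summable fsupp_summable] assms by blast

lemma fsupp_infsum_nonneg: "(\<And>x. f x \<ge> 0) \<Longrightarrow> infsum f UNIV \<ge> (0::real)"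
  by (rule infsum_nonneg) auto

lemma fsupp_infsum_ge_term:
  assumes "fsupp f" "\<And>x. f x \<ge> 0"
  shows "f y \<le> infsum f UNIV"
  using finite_sum_le_infsum[OF fsupp_summable[OF assms(1)], of "{y}"] assms by auto

lemma fsupp_infsum_add:
  "fsupp f \<Longrightarrow> fsupp g \<Longrightarrow> infsum (\<lambda>x. f x + g x) UNIV = infsum f UNIV + infsum g UNIV"
  by (rule infsum_add) (auto intro: fsupp_summable)

lemma infsum_cmult_r: "infsum (\<lambda>x. c * f x) A = c * infsum f A" for f :: "'a \<Rightarrow> real"
  by (rule infsum_cmult_right')

lemma infsum_cmult_l: "infsum (\<lambda>x. f x * c) A = infsum f A * c" for f :: "'a \<Rightarrow> real"
  by (rule infsum_cmult_left')

lemma infsum_div: "infsum (\<lambda>x. f x / c) A = infsum f A / c" for f :: "'a \<Rightarrow> real"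
  using infsum_cmult_left'[of f "inverse c" A] by (simp add: divide_inverse)

lemma fsupp_infsum_zero:
  assumes "fsupp f" "\<And>x. f x \<ge> 0" "infsum f UNIV = 0"
  shows "f x = 0"
  using fsupp_infsum_ge_term[OF assms(1,2), of x] assms(2)[of x] assms(3) by simp

definition Tc :: "'a::group_add set \<Rightarrow> ('a \<Rightarrow> real) \<Rightarrow> 'a \<Rightarrow> real" where
  "Tc S f x = (\<Sum>g\<in>S. f (- g + x)) / real (card S)"

lemma fsupp_Tc:
  assumes S: "finite S" and f: "fsupp f"
  shows "fsupp (Tc S f)"
proof -
  have "{x. Tc S f x \<noteq> 0} \<subseteq> (\<lambda>(g, y). g + y) ` (S \<times> {y. f y \<noteq> 0})"
  proof
    fix x assume "x \<in> {x. Tc S f x \<noteq> 0}"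
    then have "(\<Sum>g\<in>S. f (- g + x)) \<noteq> 0" by (auto simp: Tc_def)
    then obtain g where g: "g \<in> S" "f (- g + x) \<noteq> 0" by (meson sum.neutral)
    show "x \<in> (\<lambda>(g, y). g + y) ` (S \<times> {y. f y \<noteq> 0})"
      by (rule image_eqI[of _ _ "(g, - g + x)"]) (use g in auto)
  qed
  moreover have "finite ((\<lambda>(g, y). g + y) ` (S \<times> {y. f y \<noteq> 0}))"
    using S f by (auto simp: fsupp_def)
  ultimately show ?thesis unfolding fsupp_def by (rule finite_subset)
qed

lemma fsupp_Tc_pow: "finite S \<Longrightarrow> fsupp f \<Longrightarrow> fsupp ((Tc S ^^ n) f)"
  by (induction n) (auto intro: fsupp_Tc)

definition ip :: "('a \<Rightarrow> real) \<Rightarrow> ('a \<Rightarrow> real) \<Rightarrow> real" where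
  "ip u v = infsum (\<lambda>x. u x * v x) UNIV"

lemma Tc_selfadj:
  assumes S: "finite S" and sym: "\<And>g. g \<in> S \<Longrightarrow> - g \<in> S"
    and u: "fsupp u" and v: "fsupp v"
  shows "ip (Tc S u) v = ip u (Tc S v)"
proof -
  define N where "N = real (card S)"
  define G where "G g = infsum (\<lambda>y. u y * v (g + y)) UNIV" for g
  have "ip (Tc S u) v = infsum (\<lambda>x. (\<Sum>g\<in>S. u (- g + x) * v x) / N) UNIV"
    unfolding ip_def Tc_def N_def by (simp add: sum_distrib_right)
  also have "\<dots> = (\<Sum>g\<in>S. infsum (\<lambda>x. u (- g + x) * v x) UNIV) / N"
    by (subst infsum_div, subst infsum_fsum[OF S]) (auto intro: fsupp_mult2[OF v])
  also have "\<dots> = (\<Sum>g\<in>S. G g) / N"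
  proof -
    have "infsum (\<lambda>x. u (- g + x) * v x) UNIV = G g" for g
      using infsum_transl[of "\<lambda>x. u (- g + x) * v x" g] by (simp add: G_def add.assoc[symmetric])
    then show ?thesis by simp
  qed
  also have "(\<Sum>g\<in>S. G g) = (\<Sum>g\<in>S. G (- g))"
  proof -
    have "inj_on uminus S" by (auto simp: inj_on_def)
    moreover have "uminus ` S = S" using sym by (auto simp: image_iff intro!: bexI[of _ "- _"])
    ultimately show ?thesis using sum.reindex[of uminus S G] by (simp add: o_def)
  qed
  also have "(\<Sum>g\<in>S. G (- g)) / N = infsum (\<lambda>y. (\<Sum>g\<in>S. u y * v (- g + y)) / N) UNIV"
    by (subst infsum_div, subst infsum_fsum[OF S]) (auto simp: G_def intro: fsupp_mult[OF u])
  also have "\<dots> = ip u (Tc S v)"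
    unfolding ip_def Tc_def N_def by (simp add: sum_distrib_left)
  finally show ?thesis by simp
qed

lemma ip_sym: "ip u v = ip v u"
  unfolding ip_def by (simp add: mult.commute)

lemma ip_CS:
  assumes u: "fsupp u" and v: "fsupp v"
  shows "(ip u v)\<^sup>2 \<le> ip u u * ip v v"
proof -
  define W where "W = {x. u x \<noteq> 0} \<union> {x. v x \<noteq> 0}"
  have W: "finite W" using u v by (auto simp: W_def fsupp_def)
  have e1: "ip u v = (\<Sum>x\<in>W. u x * v x)" unfolding ip_def by (rule fs_infsum[OF W]) (auto simp: W_def)
  have e2: "ip u u = (\<Sum>x\<in>W. (u x)\<^sup>2)" unfolding ip_def by (subst fs_infsum[OF W]) (auto simp: W_def power2_eq_square)
  have e3: "ip v v = (\<Sum>x\<in>W. (v x)\<^sup>2)" unfolding ip_def by (subst fs_infsum[OF W]) (auto simp: W_def power2_eq_square)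
  show ?thesis unfolding e1 e2 e3 by (rule Cauchy_Schwarz_ineq_sum)
qed

lemma ip_self_nonneg: "ip u u \<ge> 0"
  unfolding ip_def by (rule infsum_nonneg) simp


lemma Tc_nonneg: "(\<And>x. f x \<ge> 0) \<Longrightarrow> Tc S f x \<ge> 0"
  unfolding Tc_def by (auto intro!: divide_nonneg_nonneg sum_nonneg)

lemma Tc_pow_nonneg: "(\<And>x. f x \<ge> 0) \<Longrightarrow> (Tc S ^^ n) f x \<ge> 0"
  by (induction n arbitrary: x) (auto intro: Tc_nonneg)

lemma Tc_pos:
  assumes S: "finite S" "S \<noteq> {}" and f: "\<And>x. f x \<ge> 0" and y: "f y > 0"
  shows "\<exists>x. Tc S f x > 0"
proof -
  obtain s where s: "s \<in> S" using S by auto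
  have "f (- s + (s + y)) \<le> (\<Sum>g\<in>S. f (- g + (s + y)))"
    by (rule member_le_sum[OF s]) (use f S in auto)
  then have "(\<Sum>g\<in>S. f (- g + (s + y))) > 0" using y by (simp add: add.assoc[symmetric])
  then have "Tc S f (s + y) > 0" unfolding Tc_def using S by (simp add: card_gt_0_iff)
  then show ?thesis ..
qed

lemma Tc_pow_pos:
  assumes S: "finite S" "S \<noteq> {}" and f: "\<And>x. f x \<ge> 0" and y: "f y > 0"
  shows "\<exists>x. (Tc S ^^ n) f x > 0"
proof (induction n)
  case 0 then show ?case using y by auto
next
  case (Suc n)
  then obtain x where "(Tc S ^^ n) f x > 0" by auto
  then obtain z where "Tc S ((Tc S ^^ n) f) z > 0"
    using Tc_pos[OF S, of "(Tc S ^^ n) f" x] Tc_pow_nonneg[where f=f and S=S and n=n] f by blast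
  then show ?case by auto
qed

lemma ip_Tc_pow:
  assumes S: "finite S" and sym: "\<And>g. g \<in> S \<Longrightarrow> - g \<in> S"
  shows "fsupp u \<Longrightarrow> fsupp v \<Longrightarrow> ip ((Tc S ^^ n) u) v = ip u ((Tc S ^^ n) v)"
proof (induction n arbitrary: v)
  case 0 then show ?case by simp
next
  case (Suc n)
  have "ip ((Tc S ^^ Suc n) u) v = ip ((Tc S ^^ n) u) (Tc S v)"
    using Tc_selfadj[OF S sym fsupp_Tc_pow[OF S Suc.prems(1)] Suc.prems(2)] by simp
  also have "\<dots> = ip u ((Tc S ^^ n) (Tc S v))"
    using Suc.IH[OF Suc.prems(1) fsupp_Tc[OF S Suc.prems(2)]] .
  also have "\<dots> = ip u ((Tc S ^^ Suc n) v)" by (simp add: funpow_swap1)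
  finally show ?case .
qed

lemma ip_pos:
  assumes "fsupp f" "f y \<noteq> 0"
  shows "ip f f > 0"
proof -
  have "(\<lambda>x. f x * f x) y \<le> ip f f"
    unfolding ip_def by (rule fsupp_infsum_ge_term) (use assms in \<open>auto intro: fsupp_mult\<close>)
  moreover have "f y * f y > 0" using assms(2) not_real_square_gt_zero by blast
  ultimately show ?thesis by simp
qed

locale avg =
  fixes S :: "'a::group_add set"
  assumes fin: "finite S" and ne: "S \<noteq> {}" and sym: "\<And>g. g \<in> S \<Longrightarrow> - g \<in> S"
begin

abbreviation T where "T \<equiv> Tc S"

lemma logconv:
  assumes g: "fsupp g"
  shows "(ip ((T ^^ Suc k) g) ((T ^^ Suc k) g))\<^sup>2 \<le>
         ip ((T ^^ k) g) ((T ^^ k) g) * ip ((T ^^ Suc (Suc k)) g) ((T ^^ Suc (Suc k)) g)"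
proof -
  have gk: "fsupp ((T ^^ j) g)" for j using fsupp_Tc_pow[OF fin g] .
  have "ip ((T ^^ Suc k) g) ((T ^^ Suc k) g) = ip ((T ^^ k) g) (T ((T ^^ Suc k) g))"
    using Tc_selfadj[OF fin sym gk[of k] gk[of "Suc k"]] by simp
  also have "T ((T ^^ Suc k) g) = (T ^^ Suc (Suc k)) g" by simp
  finally have e: "ip ((T ^^ Suc k) g) ((T ^^ Suc k) g) = ip ((T ^^ k) g) ((T ^^ Suc (Suc k)) g)" .
  show ?thesis unfolding e by (rule ip_CS[OF gk gk])
qed

lemma chain:
  fixes m :: "nat \<Rightarrow> real"
  assumes pos: "\<And>k. m k > 0" and lc: "\<And>k. (m (Suc k))\<^sup>2 \<le> m k * m (Suc (Suc k))"
  shows "m 0 * m 1 ^ n \<le> m 0 ^ n * m n"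
proof -
  have step: "m 1 * m k \<le> m 0 * m (Suc k)" for k
  proof (induction k)
    case 0 then show ?case by simp
  next
    case (Suc k)
    have "m 1 * m k * m (Suc k) \<le> m 0 * m (Suc k) * m (Suc k)"
      using Suc pos[of "Suc k"] by (intro mult_right_mono) auto
    also have "\<dots> = m 0 * (m (Suc k))\<^sup>2" by (simp add: power2_eq_square)
    also have "\<dots> \<le> m 0 * (m k * m (Suc (Suc k)))"
      using lc[of k] pos[of 0] by (intro mult_left_mono) auto
    finally have "m k * (m 1 * m (Suc k)) \<le> m k * (m 0 * m (Suc (Suc k)))"
      by (simp add: algebra_simps)
    then show ?case using pos[of k] by (simp add: mult_le_cancel_left_pos)
  qed
  show ?thesis
  proof (induction n)
    case 0 then show ?case by simp
  next
    case (Suc n)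
    have "m 0 * m 1 ^ Suc n = m 1 * (m 0 * m 1 ^ n)" by simp
    also have "\<dots> \<le> m 1 * (m 0 ^ n * m n)" using Suc pos[of 1] by (intro mult_left_mono) auto
    also have "\<dots> = m 0 ^ n * (m 1 * m n)" by simp
    also have "\<dots> \<le> m 0 ^ n * (m 0 * m (Suc n))"
      using step[of n] pos[of 0] by (intro mult_left_mono) auto
    also have "\<dots> = m 0 ^ Suc n * m (Suc n)" by simp
    finally show ?case .
  qed
qed

lemma T_transr: "T (\<lambda>x. f (x + c)) = (\<lambda>x. T f (x + c))"
  unfolding Tc_def by (simp add: add.assoc)

lemma T_pow_transr: "(T ^^ n) (\<lambda>x. f (x + c)) = (\<lambda>x. (T ^^ n) f (x + c))"
  by (induction n) (simp_all add: T_transr)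

lemma T_lin: "finite K \<Longrightarrow> T (\<lambda>x. \<Sum>y\<in>K. c y * f y x) = (\<lambda>x. \<Sum>y\<in>K. c y * T (f y) x)"
  unfolding Tc_def by (auto simp: fun_eq_iff sum_divide_distrib sum_distrib_left intro: sum.swap)

lemma T_pow_lin: "finite K \<Longrightarrow> (T ^^ n) (\<lambda>x. \<Sum>y\<in>K. c y * f y x) = (\<lambda>x. \<Sum>y\<in>K. c y * (T ^^ n) (f y) x)"
proof (induction n)
  case 0 then show ?case by simp
next
  case (Suc n)
  then show ?case using T_lin[OF Suc.prems, of c "\<lambda>y. (T ^^ n) (f y)"] by simp
qed

definition dlt :: "'a \<Rightarrow> real" where "dlt x = (if x = 0 then 1 else 0)"

lemma fsupp_dlt: "fsupp dlt" unfolding fsupp_def dlt_def by simp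

lemma ip_dlt: "ip dlt w = w 0"
proof -
  have "ip dlt w = (\<Sum>x\<in>{0}. dlt x * w x)" unfolding ip_def by (rule fs_infsum) (auto simp: dlt_def)
  then show ?thesis by (simp add: dlt_def)
qed

lemma expand:
  assumes K: "finite K" and g: "\<And>x. x \<notin> K \<Longrightarrow> g x = 0"
  shows "(T ^^ n) g = (\<lambda>x. \<Sum>y\<in>K. g y * (T ^^ n) dlt (x + - y))"
proof -
  have "g = (\<lambda>x. \<Sum>y\<in>K. g y * dlt (x + - y))"
  proof
    fix x
    have "(\<Sum>y\<in>K. g y * dlt (x + - y)) = (\<Sum>y\<in>K. if y = x then g y else 0)"
      by (rule sum.cong) (auto simp: dlt_def)
    also have "\<dots> = g x" using K g by (cases "x \<in> K") auto
    finally show "g x = (\<Sum>y\<in>K. g y * dlt (x + - y))" by simp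
  qed
  then have "(T ^^ n) g = (T ^^ n) (\<lambda>x. \<Sum>y\<in>K. g y * dlt (x + - y))" by simp
  also have "\<dots> = (\<lambda>x. \<Sum>y\<in>K. g y * (T ^^ n) (\<lambda>x. dlt (x + - y)) x)" by (rule T_pow_lin[OF K])
  also have "\<dots> = (\<lambda>x. \<Sum>y\<in>K. g y * (T ^^ n) dlt (x + - y))" by (simp only: T_pow_transr)
  finally show ?thesis .
qed

lemma mn_bound:
  assumes K: "finite K" and g: "\<And>x. x \<notin> K \<Longrightarrow> g x = 0"
  shows "ip ((T ^^ n) g) ((T ^^ n) g) \<le> real (card K) * ip g g * (T ^^ (2 * n)) dlt 0"
proof -
  define u where "u = (T ^^ n) dlt"
  have gs: "fsupp g" unfolding fsupp_def by (rule finite_subset[OF _ K]) (use g in auto)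
  have us: "fsupp u" unfolding u_def by (rule fsupp_Tc_pow[OF fin fsupp_dlt])
  have usq: "fsupp (\<lambda>x. u (x + - y) * u (x + - y))" for y
    by (rule fsupp_mult, rule fsupp_transr[OF us])
  have gg: "ip g g = (\<Sum>y\<in>K. (g y)\<^sup>2)" unfolding ip_def power2_eq_square
    by (rule fs_infsum[OF K]) (simp add: g)
  have pt: "((T ^^ n) g x) * ((T ^^ n) g x) \<le> ip g g * (\<Sum>y\<in>K. u (x + - y) * u (x + - y))" for x
  proof -
    have e0: "(T ^^ n) g = (\<lambda>x. \<Sum>y\<in>K. g y * u (x + - y))"
      unfolding u_def by (rule expand[OF K g])
    have e: "(T ^^ n) g x = (\<Sum>y\<in>K. g y * u (x + - y))"
      using fun_cong[OF e0, of x] by simp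
    have "((T ^^ n) g x) * ((T ^^ n) g x) = (\<Sum>y\<in>K. g y * u (x + - y))\<^sup>2"
      by (simp only: e power2_eq_square)
    also have "\<dots> \<le> (\<Sum>y\<in>K. (g y)\<^sup>2) * (\<Sum>y\<in>K. (u (x + - y))\<^sup>2)" by (rule Cauchy_Schwarz_ineq_sum)
    finally show ?thesis by (simp add: gg power2_eq_square)
  qed
  have "ip ((T ^^ n) g) ((T ^^ n) g) \<le> infsum (\<lambda>x. ip g g * (\<Sum>y\<in>K. u (x + - y) * u (x + - y))) UNIV"
  proof -
    have f1: "fsupp (\<lambda>x. (T ^^ n) g x * (T ^^ n) g x)" by (rule fsupp_mult[OF fsupp_Tc_pow[OF fin gs]])
    have f2: "fsupp (\<lambda>x. ip g g * (\<Sum>y\<in>K. u (x + - y) * u (x + - y)))"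
      by (rule fsupp_mult2, rule fsupp_sum[OF K], rule usq)
    show ?thesis unfolding ip_def[of "(T ^^ n) g"] by (rule fsupp_infsum_mono[OF f1 f2 pt])
  qed
  also have "\<dots> = ip g g * (\<Sum>y\<in>K. infsum (\<lambda>x. u (x + - y) * u (x + - y)) UNIV)"
  proof -
    have "infsum (\<lambda>x. \<Sum>y\<in>K. u (x + - y) * u (x + - y)) UNIV =
          (\<Sum>y\<in>K. infsum (\<lambda>x. u (x + - y) * u (x + - y)) UNIV)"
      using infsum_fsum[of K "\<lambda>y x. u (x + - y) * u (x + - y)"] K usq by blast
    then show ?thesis by (simp only: infsum_cmult_r)
  qed
  also have "(\<Sum>y\<in>K. infsum (\<lambda>x. u (x + - y) * u (x + - y)) UNIV) = real (card K) * ip u u"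
  proof -
    have "infsum (\<lambda>x. u (x + - y) * u (x + - y)) UNIV = ip u u" for y
      unfolding ip_def by (rule infsum_transr[of "\<lambda>x. u x * u x"])
    then show ?thesis by simp
  qed
  also have "ip u u = (T ^^ (2 * n)) dlt 0"
  proof -
    have "ip u u = ip dlt ((T ^^ n) u)" unfolding u_def by (rule ip_Tc_pow[OF fin sym fsupp_dlt us[unfolded u_def]])
    also have "(T ^^ n) u = (T ^^ (2 * n)) dlt" unfolding u_def by (simp add: funpow_add mult_2)
    finally show ?thesis by (simp add: ip_dlt)
  qed
  finally show ?thesis by (simp add: mult.assoc mult.left_commute)
qed

lemma T_l2_bound:
  assumes th: "\<theta> \<ge> 0" and H: "\<And>n. (T ^^ n) dlt 0 \<le> \<theta> ^ n"
    and g: "fsupp g" and gn: "\<And>x. g x \<ge> 0"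
  shows "ip (T g) (T g) \<le> \<theta>\<^sup>2 * ip g g"
proof (cases "\<forall>x. g x = 0")
  case True
  then have "g = (\<lambda>_. 0)" by auto
  then show ?thesis by (simp add: ip_def Tc_def)
next
  case False
  then obtain y where "g y \<noteq> 0" by auto
  then have y: "g y > 0" using gn[of y] by linarith
  define m where "m k = ip ((T ^^ k) g) ((T ^^ k) g)" for k
  have pos: "m k > 0" for k
  proof -
    obtain x where "(T ^^ k) g x > 0" using Tc_pow_pos[where f=g and S=S and y=y and n=k, OF fin ne gn y] by blast
    then show ?thesis unfolding m_def by (intro ip_pos[where y=x, OF fsupp_Tc_pow[OF fin g]]) auto
  qed
  have lc: "(m (Suc k))\<^sup>2 \<le> m k * m (Suc (Suc k))" for k unfolding m_def by (rule logconv[OF g])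
  define K where "K = {x. g x \<noteq> 0}"
  have K: "finite K" using g by (simp add: K_def fsupp_def)
  have m0: "m 0 = ip g g" by (simp add: m_def)
  have mb: "m n \<le> real (card K) * m 0 * (\<theta>\<^sup>2) ^ n" for n
  proof -
    have "m n \<le> real (card K) * ip g g * (T ^^ (2 * n)) dlt 0"
      unfolding m_def by (rule mn_bound[OF K]) (simp add: K_def)
    also have "\<dots> \<le> real (card K) * ip g g * \<theta> ^ (2 * n)"
      using H[of "2*n"] ip_self_nonneg[of g] by (intro mult_left_mono) auto
    finally show ?thesis by (simp add: m0 power_mult)
  qed
  have key: "m 1 ^ n \<le> real (card K) * (m 0 * \<theta>\<^sup>2) ^ n" for n
  proof -
    have "m 0 * m 1 ^ n \<le> m 0 ^ n * m n" by (rule chain[of m, OF pos lc])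
    also have "\<dots> \<le> m 0 ^ n * (real (card K) * m 0 * (\<theta>\<^sup>2) ^ n)"
      using mb[of n] pos[of 0] by (intro mult_left_mono) auto
    also have "\<dots> = m 0 * (real (card K) * (m 0 * \<theta>\<^sup>2) ^ n)" by (simp add: power_mult_distrib)
    finally show ?thesis using pos[of 0] by (simp add: mult_le_cancel_left_pos)
  qed
  have "m 1 \<le> m 0 * \<theta>\<^sup>2"
  proof (rule ccontr)
    assume "\<not> ?thesis"
    then have gt: "m 1 > m 0 * \<theta>\<^sup>2" by simp
    show False
    proof (cases "m 0 * \<theta>\<^sup>2 = 0")
      case True
      have "m 1 ^ 1 \<le> real (card K) * (m 0 * \<theta>\<^sup>2) ^ 1" by (rule key)
      then have "m 1 \<le> 0" unfolding True by simp
      with pos[of 1] show False by simp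
    next
      case False
      have c: "m 0 * \<theta>\<^sup>2 > 0" using False pos[of 0] th by (simp add: less_le)
      define q where "q = m 1 / (m 0 * \<theta>\<^sup>2)"
      have q: "q > 1" unfolding q_def using gt c by simp
      obtain n where n: "real (card K) < q ^ n" using real_arch_pow[OF q] by blast
      have "q * (m 0 * \<theta>\<^sup>2) = m 1"
      proof -
        obtain z where z: "z = m 0 * \<theta>\<^sup>2" by blast
        have "z > 0" using c z by simp
        then have "m 1 / z * z = m 1" by simp
        then show ?thesis unfolding q_def z by simp
      qed
      then have "m 1 ^ n = q ^ n * (m 0 * \<theta>\<^sup>2) ^ n" by (metis power_mult_distrib)
      then have "q ^ n * (m 0 * \<theta>\<^sup>2) ^ n \<le> real (card K) * (m 0 * \<theta>\<^sup>2) ^ n" using key[of n] by simp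
      then have "q ^ n \<le> real (card K)" using c by simp
      then show False using n by simp
    qed
  qed
  then show ?thesis by (simp add: m_def mult.commute)
qed

end


definition aS :: "'a::group_add set \<Rightarrow> 'a \<Rightarrow> complex" where
  "aS S = (\<lambda>g. if g \<in> S then complex_of_real (1 / real (card S)) else 0)"

lemma lp_fin:
  fixes f :: "'a \<Rightarrow> complex"
  assumes W: "finite W" and z: "\<And>x. x \<notin> W \<Longrightarrow> f x = 0" and p: "p > 0"
  shows "lp_norm p f = (\<Sum>x\<in>W. norm (f x) powr p) powr (1/p)" "in_lp p f"
proof -
  have z': "\<And>x. x \<notin> W \<Longrightarrow> norm (f x) powr p = 0" using z by simp
  show "lp_norm p f = (\<Sum>x\<in>W. norm (f x) powr p) powr (1/p)"
    unfolding lp_norm_def by (subst fs_infsum[OF W z']) simp_all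
  show "in_lp p f" unfolding in_lp_def by (rule fs_summable[OF W z'])
qed

lemma lp_bound:
  fixes h :: "'a \<Rightarrow> complex"
  assumes p: "p > 0" and B: "B \<ge> 0"
    and fs: "\<And>X. finite X \<Longrightarrow> (\<Sum>x\<in>X. norm (h x) powr p) \<le> B"
  shows "lp_norm p h \<le> B powr (1/p)"
proof -
  have I: "infsum (\<lambda>x. norm (h x) powr p) UNIV \<le> B"
  proof (cases "(\<lambda>x. norm (h x) powr p) summable_on UNIV")
    case True then show ?thesis by (rule infsum_le_finite_sums) (use fs in auto)
  next
    case False then show ?thesis using B by (simp add: infsum_not_exists)
  qed
  have "infsum (\<lambda>x. norm (h x) powr p) UNIV \<ge> 0" by (rule infsum_nonneg) simp
  then show ?thesis unfolding lp_norm_def using I p by (intro powr_mono2) auto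
qed

lemma lp_norm_nonneg: "lp_norm p f \<ge> 0" unfolding lp_norm_def by simp

lemma lp_norm_zero[simp]: "lp_norm p (\<lambda>_. 0) = 0" unfolding lp_norm_def by simp

lemma lp_norm_scale:
  fixes f :: "'a \<Rightarrow> complex"
  assumes p: "p > 0"
  shows "lp_norm p (\<lambda>x. c * f x) = norm c * lp_norm p f"
proof -
  have "infsum (\<lambda>x. norm (c * f x) powr p) UNIV = norm c powr p * infsum (\<lambda>x. norm (f x) powr p) UNIV"
    by (simp add: norm_mult powr_mult infsum_cmult_r)
  then have "lp_norm p (\<lambda>x. c * f x) = (norm c powr p) powr (1/p) * lp_norm p f"
    unfolding lp_norm_def by (simp add: powr_mult)
  also have "(norm c powr p) powr (1/p) = norm c" using p by (simp add: powr_powr)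
  finally show ?thesis .
qed

lemma in_lp_scale:
  fixes f :: "'a \<Rightarrow> complex"
  shows "in_lp p f \<Longrightarrow> in_lp p (\<lambda>x. c * f x)"
  unfolding in_lp_def by (simp add: norm_mult powr_mult summable_on_cmult_right)

lemma in_lp_zero[simp]: "in_lp p (\<lambda>_. 0)"
  unfolding in_lp_def by simp

lemma op_norm_bdd:
  assumes "\<And>f. in_lp p f \<Longrightarrow> lp_norm p f \<le> 1 \<Longrightarrow> lp_norm p (conv a f) \<le> B"
  shows "bdd_above {lp_norm p (conv a f) | f. in_lp p f \<and> lp_norm p f \<le> 1}"
  using assms unfolding bdd_above_def by blast

lemma op_norm_ge:
  assumes "\<And>f. in_lp p f \<Longrightarrow> lp_norm p f \<le> 1 \<Longrightarrow> lp_norm p (conv a f) \<le> B"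
    and "in_lp p f" "lp_norm p f \<le> 1"
  shows "lp_norm p (conv a f) \<le> op_norm p a"
  unfolding op_norm_def by (rule cSup_upper[OF _ op_norm_bdd[OF assms(1)]]) (use assms(2,3) in blast)

lemma op_norm_le:
  assumes "\<And>f. in_lp p f \<Longrightarrow> lp_norm p f \<le> 1 \<Longrightarrow> lp_norm p (conv a f) \<le> c"
  shows "op_norm p a \<le> c"
  unfolding op_norm_def
proof (rule cSup_least)
  show "{lp_norm p (conv a f) | f. in_lp p f \<and> lp_norm p f \<le> 1} \<noteq> {}"
    by (auto intro!: exI[of _ "\<lambda>_. 0"])
qed (use assms in blast)

lemma conv_scale: "conv a (\<lambda>x. c * f x) = (\<lambda>x. c * conv a f x)"
  unfolding conv_def by (auto simp: fun_eq_iff sum_distrib_left algebra_simps)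

context avg
begin

lemma supp_aS: "supp (aS S) = S"
  using fin ne unfolding supp_def aS_def by (auto simp: card_gt_0_iff)

lemma conv_aS: "conv (aS S) f x = complex_of_real (1 / real (card S)) * (\<Sum>g\<in>S. f (- g + x))"
  unfolding conv_def supp_aS by (simp add: aS_def sum_distrib_left)

lemma conv_real: "conv (aS S) (\<lambda>x. complex_of_real (h x)) = (\<lambda>x. complex_of_real (T h x))"
  by (auto simp: fun_eq_iff conv_aS Tc_def divide_inverse)

lemma conv_norm: "norm (conv (aS S) f x) \<le> T (\<lambda>y. norm (f y)) x"
proof -
  have "norm (conv (aS S) f x) = (1 / real (card S)) * norm (\<Sum>g\<in>S. f (- g + x))"
    by (simp add: conv_aS norm_mult norm_divide)
  also have "\<dots> \<le> (1 / real (card S)) * (\<Sum>g\<in>S. norm (f (- g + x)))"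
    by (intro mult_left_mono norm_sum) simp
  finally show ?thesis by (simp add: Tc_def)
qed

definition N where "N = real (card S)"

lemma N_pos: "N > 0" using fin ne by (simp add: N_def card_gt_0_iff)

lemma crude:
  assumes p: "p \<ge> 1" and f: "in_lp p f" "lp_norm p f \<le> 1"
  shows "lp_norm p (conv (aS S) f) \<le> N powr (1/p)"
proof (rule lp_bound)
  show "p > 0" "N \<ge> 0" using p N_pos by auto
  define I where "I = infsum (\<lambda>x. norm (f x) powr p) UNIV"
  have I0: "I \<ge> 0" unfolding I_def by (rule infsum_nonneg) simp
  have I1: "I \<le> 1"
  proof -
    have "I powr (1/p) \<le> 1" using f(2) unfolding lp_norm_def I_def .
    then have "(I powr (1/p)) powr p \<le> 1 powr p" using p by (intro powr_mono2) auto
    then show ?thesis using I0 p by (simp add: powr_powr)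
  qed
  have sm: "(\<lambda>x. norm (f x) powr p) summable_on UNIV" using f(1) by (simp add: in_lp_def)
  fix X :: "'a set" assume X: "finite X"
  have pt: "norm (conv (aS S) f x) powr p \<le> (\<Sum>g\<in>S. norm (f (- g + x)) powr p)" for x
  proof -
    define M where "M = (\<Sum>g\<in>S. norm (f (- g + x)) powr p)"
    have M0: "M \<ge> 0" unfolding M_def by (simp add: sum_nonneg)
    have each: "norm (f (- g + x)) \<le> M powr (1/p)" if g: "g \<in> S" for g
    proof -
      have "norm (f (- g + x)) powr p \<le> M" unfolding M_def
        by (rule member_le_sum[OF g]) (use fin in auto)
      then have "(norm (f (- g + x)) powr p) powr (1/p) \<le> M powr (1/p)" using p by (intro powr_mono2) auto
      then show ?thesis using p by (simp add: powr_powr)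
    qed
    have "norm (conv (aS S) f x) \<le> T (\<lambda>y. norm (f y)) x" by (rule conv_norm)
    also have "\<dots> \<le> M powr (1/p)"
    proof -
      have "(\<Sum>g\<in>S. norm (f (- g + x))) \<le> (\<Sum>g\<in>S. M powr (1/p))" by (rule sum_mono) (rule each)
      then show ?thesis using N_pos unfolding Tc_def N_def by (simp add: divide_le_eq mult.commute)
    qed
    finally have "norm (conv (aS S) f x) powr p \<le> (M powr (1/p)) powr p" using p by (intro powr_mono2) auto
    also have "\<dots> = M" using M0 p by (simp add: powr_powr)
    finally show ?thesis unfolding M_def .
  qed
  have "(\<Sum>x\<in>X. norm (conv (aS S) f x) powr p) \<le> (\<Sum>x\<in>X. \<Sum>g\<in>S. norm (f (- g + x)) powr p)"
    by (rule sum_mono) (rule pt)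
  also have "\<dots> = (\<Sum>g\<in>S. \<Sum>x\<in>X. norm (f (- g + x)) powr p)" by (rule sum.swap)
  also have "\<dots> \<le> (\<Sum>g\<in>S. I)"
  proof (rule sum_mono)
    fix g assume "g \<in> S"
    have inj: "inj_on (\<lambda>x. - g + x) X" by (auto simp: inj_on_def)
    have "(\<Sum>x\<in>X. norm (f (- g + x)) powr p) = (\<Sum>y\<in>(\<lambda>x. - g + x) ` X. norm (f y) powr p)"
      by (simp add: sum.reindex[OF inj])
    also have "\<dots> \<le> I" unfolding I_def by (rule finite_sum_le_infsum[OF sm]) (use X in auto)
    finally show "(\<Sum>x\<in>X. norm (f (- g + x)) powr p) \<le> I" .
  qed
  also have "\<dots> \<le> N" using I1 by (simp add: N_def mult_left_le)
  finally show "(\<Sum>x\<in>X. norm (conv (aS S) f x) powr p) \<le> N" .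
qed

lemma opge:
  assumes p: "p \<ge> 1" and "in_lp p f" "lp_norm p f \<le> 1"
  shows "lp_norm p (conv (aS S) f) \<le> op_norm p (aS S)"
  by (rule op_norm_ge[OF crude[OF p]]) (use assms in auto)

lemma op_nonneg:
  assumes p: "p \<ge> 1"
  shows "op_norm p (aS S) \<ge> 0"
proof -
  have "lp_norm p (conv (aS S) (\<lambda>_. 0)) \<le> op_norm p (aS S)" by (rule opge[OF p in_lp_zero]) (simp add: lp_norm_zero)
  then show ?thesis using lp_norm_nonneg[of p "conv (aS S) (\<lambda>_. 0)"] by linarith
qed

lemma op_scaled:
  assumes p: "p \<ge> 1" and W: "finite W" and z: "\<And>x. x \<notin> W \<Longrightarrow> f x = 0"
  shows "lp_norm p (conv (aS S) f) \<le> op_norm p (aS S) * lp_norm p f"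
proof (cases "lp_norm p f = 0")
  case True
  have "(\<Sum>x\<in>W. norm (f x) powr p) = 0"
    using True lp_fin(1)[where p=p, OF W z] p by simp
  then have "\<forall>x\<in>W. norm (f x) powr p = 0" using W by (subst (asm) sum_nonneg_eq_0_iff) auto
  then have "f = (\<lambda>_. 0)" using z by (auto simp: fun_eq_iff)
  moreover then have "conv (aS S) f = (\<lambda>_. 0)" by (simp add: conv_def fun_eq_iff)
  ultimately show ?thesis by simp
next
  case False
  define c where "c = lp_norm p f"
  have c: "c > 0" using False lp_norm_nonneg[of p f] unfolding c_def by simp
  define v where "v x = complex_of_real (1 / c) * f x" for x
  have pv: "p > 0" using p by simp
  have v1: "lp_norm p v = 1"
  proof -
    have "lp_norm p v = norm (complex_of_real (1 / c)) * lp_norm p f"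
      unfolding v_def by (rule lp_norm_scale[OF pv])
    then show ?thesis using c unfolding c_def by (simp add: norm_divide)
  qed
  have vin: "in_lp p v" unfolding v_def by (rule in_lp_scale, rule lp_fin(2)[OF W z pv])
  have "lp_norm p (conv (aS S) v) \<le> op_norm p (aS S)" by (rule opge[OF p vin]) (simp add: v1)
  moreover have "lp_norm p (conv (aS S) v) = (1 / c) * lp_norm p (conv (aS S) f)"
    unfolding v_def conv_scale lp_norm_scale[OF pv] using c by (simp add: norm_divide)
  ultimately show ?thesis using c unfolding c_def by (simp add: divide_le_eq mult.commute)
qed

lemma u_bound:
  assumes p: "p \<ge> 1"
  shows "(T ^^ n) dlt 0 \<le> op_norm p (aS S) ^ n"
proof -
  define \<theta> where "\<theta> = op_norm p (aS S)"
  have th: "\<theta> \<ge> 0" unfolding \<theta>_def by (rule op_nonneg[OF p])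
  have pv: "p > 0" using p by simp
  define U where "U k = (\<lambda>x. complex_of_real ((T ^^ k) dlt x))" for k
  have finU: "fsupp ((T ^^ k) dlt)" for k by (rule fsupp_Tc_pow[OF fin fsupp_dlt])
  have lpU: "lp_norm p (U k) \<le> \<theta> ^ k" for k
  proof (induction k)
    case 0
    have "lp_norm p (U 0) = (\<Sum>x\<in>{0}. norm (U 0 x) powr p) powr (1/p)"
      by (rule lp_fin(1)[OF _ _ pv]) (auto simp: U_def dlt_def)
    then show ?case by (simp add: U_def dlt_def)
  next
    case (Suc k)
    have e: "U (Suc k) = conv (aS S) (U k)" unfolding U_def by (simp add: conv_real)
    have "lp_norm p (U (Suc k)) \<le> \<theta> * lp_norm p (U k)"
      unfolding \<theta>_def e
      by (rule op_scaled[OF p, of "{x. (T ^^ k) dlt x \<noteq> 0}"]) (use finU[of k] in \<open>auto simp: fsupp_def U_def\<close>)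
    also have "\<dots> \<le> \<theta> * \<theta> ^ k" using Suc th by (intro mult_left_mono) auto
    finally show ?case by simp
  qed
  have "(T ^^ n) dlt 0 \<le> lp_norm p (U n)"
  proof -
    define W where "W = {x. (T ^^ n) dlt x \<noteq> 0}"
    have W: "finite W" using finU[of n] by (simp add: W_def fsupp_def)
    have e: "lp_norm p (U n) = (\<Sum>x\<in>W. norm (U n x) powr p) powr (1/p)"
      by (rule lp_fin(1)[OF W _ pv]) (simp add: W_def U_def)
    have nn: "(T ^^ n) dlt 0 \<ge> 0" by (rule Tc_pow_nonneg) (simp add: dlt_def)
    have "norm (U n 0) powr p \<le> (\<Sum>x\<in>W. norm (U n x) powr p)"
    proof (cases "0 \<in> W")
      case True then show ?thesis by (intro member_le_sum) (use W in auto)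
    next
      case False then show ?thesis by (simp add: W_def U_def sum_nonneg)
    qed
    then have "(norm (U n 0) powr p) powr (1/p) \<le> lp_norm p (U n)" unfolding e using pv
      by (intro powr_mono2) auto
    then show ?thesis using pv nn by (simp add: powr_powr U_def)
  qed
  then show ?thesis using lpU[of n] unfolding \<theta>_def by simp
qed

end


lemma rho_eq: "rho S = op_norm 2 (aS S)"
  unfolding rho_def aS_def ..

context avg
begin

lemma lp_aS:
  assumes p: "p > 0"
  shows "lp_norm p (aS S) = N powr (1/p - 1)"
proof -
  have "lp_norm p (aS S) = (\<Sum>x\<in>S. norm (aS S x) powr p) powr (1/p)"
    by (rule lp_fin(1)[OF fin _ p]) (simp add: aS_def)
  also have "(\<Sum>x\<in>S. norm (aS S x) powr p) = N * (1 / N) powr p"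
    by (simp add: aS_def N_def norm_divide)
  also have "(N * (1 / N) powr p) powr (1/p) = N powr (1/p) * (1 / N)"
    using p N_pos by (simp add: powr_mult powr_powr)
  also have "\<dots> = N powr (1/p - 1)" using N_pos by (simp add: powr_diff)
  finally show ?thesis .
qed

lemma rho_ge: "rho S \<ge> N powr (- 1/2)"
proof -
  define dc :: "'a \<Rightarrow> complex" where "dc x = (if x = 0 then 1 else 0)" for x
  have din: "in_lp 2 dc" by (rule lp_fin(2)[of "{0}"]) (auto simp: dc_def)
  have dn: "lp_norm 2 dc = 1"
  proof -
    have "lp_norm 2 dc = (\<Sum>x\<in>{0}. norm (dc x) powr 2) powr (1/2)"
      by (rule lp_fin(1)) (auto simp: dc_def)
    then show ?thesis by (simp add: dc_def)
  qed
  have cv: "conv (aS S) dc = aS S"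
  proof
    fix x
    have "conv (aS S) dc x = (\<Sum>g\<in>S. aS S g * dc (- g + x))" unfolding conv_def supp_aS ..
    also have "\<dots> = (\<Sum>g\<in>S. if g = x then aS S g else 0)"
    proof (rule sum.cong[OF refl])
      fix g
      have "- g + x = 0 \<longleftrightarrow> g = x"
      proof
        assume "- g + x = 0"
        then have "g + (- g + x) = g + 0" by simp
        then show "g = x" by (simp add: add.assoc[symmetric])
      qed simp
      then show "aS S g * dc (- g + x) = (if g = x then aS S g else 0)" by (simp add: dc_def)
    qed
    also have "\<dots> = aS S x" using fin by (simp add: aS_def)
    finally show "conv (aS S) dc x = aS S x" .
  qed
  have "lp_norm 2 (conv (aS S) dc) \<le> op_norm 2 (aS S)" by (rule opge) (use din dn in auto)
  then show ?thesis unfolding rho_eq cv using lp_aS[of 2] by simp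
qed

lemma rho_pos: "rho S > 0"
proof -
  have "N powr (- 1/2) > 0" using N_pos by simp
  then show ?thesis using rho_ge by linarith
qed

lemma rho_le:
  assumes p: "p \<ge> 1"
  shows "rho S \<le> op_norm p (aS S)"
proof -
  define \<theta> where "\<theta> = op_norm p (aS S)"
  have th: "\<theta> \<ge> 0" unfolding \<theta>_def by (rule op_nonneg[OF p])
  have H: "(T ^^ n) dlt 0 \<le> \<theta> ^ n" for n unfolding \<theta>_def by (rule u_bound[OF p])
  show ?thesis unfolding rho_eq \<theta>_def[symmetric]
  proof (rule op_norm_le)
    fix f :: "'a \<Rightarrow> complex" assume f: "in_lp 2 f" "lp_norm 2 f \<le> 1"
    define I where "I = infsum (\<lambda>x. norm (f x) powr 2) UNIV"
    have I0: "I \<ge> 0" unfolding I_def by (rule infsum_nonneg) simp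
    have I1: "I \<le> 1"
    proof -
      have "I powr (1/2) \<le> 1" using f(2) unfolding lp_norm_def I_def .
      then have "(I powr (1/2)) powr 2 \<le> 1 powr 2" by (intro powr_mono2) auto
      then show ?thesis using I0 by (simp add: powr_powr)
    qed
    have sm: "(\<lambda>x. norm (f x) powr 2) summable_on UNIV" using f(1) by (simp add: in_lp_def)
    have "lp_norm 2 (conv (aS S) f) \<le> (\<theta>\<^sup>2) powr (1/2)"
    proof (rule lp_bound)
      fix X :: "'a set" assume X: "finite X"
      define Y where "Y = (\<lambda>(s, x). - s + x) ` (S \<times> X)"
      have Y: "finite Y" using X fin by (simp add: Y_def)
      define fY where "fY y = (if y \<in> Y then f y else 0)" for y
      define h where "h y = norm (fY y)" for y
      have hs: "fsupp h" unfolding fsupp_def h_def fY_def by (rule finite_subset[OF _ Y]) auto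
      have hn: "h y \<ge> 0" for y by (simp add: h_def)
      have eqc: "conv (aS S) f x = conv (aS S) fY x" if "x \<in> X" for x
        unfolding conv_aS fY_def using that by (auto simp: Y_def intro!: sum.cong)
      have "(\<Sum>x\<in>X. norm (conv (aS S) f x) powr 2) = (\<Sum>x\<in>X. (norm (conv (aS S) fY x))\<^sup>2)"
        by (rule sum.cong) (auto simp: eqc)
      also have "\<dots> \<le> (\<Sum>x\<in>X. T h x * T h x)"
      proof (rule sum_mono)
        fix x
        have a: "norm (conv (aS S) fY x) \<le> T h x" unfolding h_def by (rule conv_norm)
        have b: "0 \<le> T h x" by (rule Tc_nonneg) (simp add: h_def)
        show "(norm (conv (aS S) fY x))\<^sup>2 \<le> T h x * T h x"
          unfolding power2_eq_square by (rule mult_mono[OF a a b]) simp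
      qed
      also have "\<dots> \<le> ip (T h) (T h)" unfolding ip_def
        by (rule finite_sum_le_infsum[OF fsupp_summable[OF fsupp_mult[OF fsupp_Tc[OF fin hs]]] X])
          auto
      also have "\<dots> \<le> \<theta>\<^sup>2 * ip h h" by (rule T_l2_bound[OF th H hs hn])
      also have "ip h h \<le> I"
      proof -
        have "ip h h = (\<Sum>y\<in>Y. norm (f y) powr 2)" unfolding ip_def
          by (subst fs_infsum[OF Y]) (auto simp: h_def fY_def power2_eq_square)
        also have "\<dots> \<le> I" unfolding I_def by (rule finite_sum_le_infsum[OF sm Y]) auto
        finally show ?thesis .
      qed
      then have "\<theta>\<^sup>2 * ip h h \<le> \<theta>\<^sup>2 * 1" using I1 by (intro mult_left_mono) auto
      finally show "(\<Sum>x\<in>X. norm (conv (aS S) f x) powr 2) \<le> \<theta>\<^sup>2" by simp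
    qed auto
    also have "(\<theta>\<^sup>2) powr (1/2) = \<theta>" using th by (simp add: powr_half_sqrt)
    finally show "lp_norm 2 (conv (aS S) f) \<le> \<theta>" .
  qed
qed

end


lemma poly_bound:
  fixes P :: "real poly" and x :: real
  assumes x: "x \<ge> 0"
  shows "\<bar>poly P x\<bar> \<le> (\<Sum>i\<le>degree P. \<bar>coeff P i\<bar>) * (1 + x) ^ degree P"
proof -
  have "\<bar>poly P x\<bar> = \<bar>\<Sum>i\<le>degree P. coeff P i * x ^ i\<bar>" by (simp add: poly_altdef)
  also have "\<dots> \<le> (\<Sum>i\<le>degree P. \<bar>coeff P i * x ^ i\<bar>)" by (rule sum_abs)
  also have "\<dots> \<le> (\<Sum>i\<le>degree P. \<bar>coeff P i\<bar> * (1 + x) ^ degree P)"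
  proof (rule sum_mono)
    fix i assume i: "i \<in> {..degree P}"
    have "x ^ i \<le> (1 + x) ^ i" using x by (intro power_mono) auto
    also have "\<dots> \<le> (1 + x) ^ degree P" using i x by (intro power_increasing) auto
    finally have "\<bar>x ^ i\<bar> \<le> (1 + x) ^ degree P" using x by simp
    then show "\<bar>coeff P i * x ^ i\<bar> \<le> \<bar>coeff P i\<bar> * (1 + x) ^ degree P"
      by (simp add: abs_mult mult_left_mono)
  qed
  also have "\<dots> = (\<Sum>i\<le>degree P. \<bar>coeff P i\<bar>) * (1 + x) ^ degree P" by (simp add: sum_distrib_right)
  finally show ?thesis .
qed

lemma ereal_neg_le: "ereal (- c) \<le> X \<Longrightarrow> - X \<le> ereal c"
  by (metis ereal_minus_le_minus uminus_ereal.simps(1) minus_minus)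

lemma ereal_neg_ge: "X \<le> ereal (- c) \<Longrightarrow> ereal c \<le> - X"
  by (metis ereal_minus_le_minus uminus_ereal.simps(1) minus_minus)

lemma avgI: "finite_symmetric S \<Longrightarrow> S \<noteq> {} \<Longrightarrow> avg S"
  unfolding finite_symmetric_def avg_def by auto

lemma rho_RD:
  fixes L :: "'a::group_add \<Rightarrow> real"
  assumes p: "p \<ge> 1"
    and rd: "\<forall>(a::'a \<Rightarrow> complex) d. finite (supp a) \<and> d \<ge> 0 \<and> supp a \<subseteq> {g. L g \<le> d} \<longrightarrow>
        op_norm p a \<le> poly P d * lp_norm p a"
    and S: "avg S" and d: "d \<ge> 0" and sub: "S \<subseteq> {g. L g \<le> d}"
  shows "rho S \<le> poly P d * real (card S) powr (1/p - 1)"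
proof -
  interpret avg S by (rule S)
  have "op_norm p (aS S) \<le> poly P d * lp_norm p (aS S)"
    using rd[rule_format, of "aS S" d] fin d sub by (simp add: supp_aS)
  also have "lp_norm p (aS S) = real (card S) powr (1/p - 1)" using lp_aS[of p] p by (simp add: N_def)
  finally show ?thesis using rho_le[OF p] by linarith
qed

lemma r_upper: "r_exponent TYPE('a::group_add) \<le> ereal (1/2)"
proof -
  define f where "f S = ereal (ln (rho S) / ln (real (card S)))" for S :: "'a set"
  have S0: "finite_symmetric {0::'a}" by (simp add: finite_symmetric_def)
  have "ereal (- 1/2) \<le> (INF S'\<in>{S'. finite_symmetric S' \<and> {0::'a} \<subseteq> S'}. f S')"
  proof (rule INF_greatest)
    fix S' :: "'a set" assume S': "S' \<in> {S'. finite_symmetric S' \<and> {0} \<subseteq> S'}"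
    then have av: "avg S'" by (auto intro: avgI)
    interpret avg S' by (rule av)
    have c1: "card S' \<ge> 1" using fin ne by (simp add: Suc_le_eq card_gt_0_iff)
    show "ereal (- 1/2) \<le> f S'"
    proof (cases "card S' = 1")
      case True then show ?thesis by (simp add: f_def)
    next
      case False
      then have c2: "real (card S') > 1" using c1 by simp
      then have lnN: "ln (real (card S')) > 0" by simp
      have "ln (N powr (-1/2)) \<le> ln (rho S')"
        using rho_ge N_pos rho_pos by (subst ln_le_cancel_iff) auto
      then have "- 1/2 * ln (real (card S')) \<le> ln (rho S')" using N_pos by (simp add: N_def)
      then have "- 1/2 \<le> ln (rho S') / ln (real (card S'))" using lnN by (simp add: le_divide_eq)
      then show ?thesis by (simp add: f_def)
    qed
  qed
  also have "\<dots> \<le> (SUP S\<in>{S::'a set. finite_symmetric S}. INF S'\<in>{S'. finite_symmetric S' \<and> S \<subseteq> S'}. f S')"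
    by (rule SUP_upper2[OF _ order_refl]) (use S0 in simp)
  finally have "ereal (- (1/2)) \<le> (SUP S\<in>{S::'a set. finite_symmetric S}. INF S'\<in>{S'. finite_symmetric S' \<and> S \<subseteq> S'}. f S')"
    by simp
  then show ?thesis unfolding r_exponent_def f_def by (rule ereal_neg_le)
qed


lemma part1:
  fixes p :: real
  assumes na: "\<not> amenable TYPE('a::group_add)" and p: "1 \<le> p" and RD: "has_RD p TYPE('a)"
  shows "r_exponent TYPE('a) \<ge> ereal (1 - 1 / p)"
proof -
  obtain L :: "'a \<Rightarrow> real" and P :: "real poly" where lf: "length_function L" and
    rd: "\<forall>(a::'a \<Rightarrow> complex) d. finite (supp a) \<and> d \<ge> 0 \<and> supp a \<subseteq> {g. L g \<le> d} \<longrightarrow>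
        op_norm p a \<le> poly P d * lp_norm p a"
    using RD unfolding has_RD_def by blast
  have Lnn: "\<And>g. L g \<ge> 0" and L0: "L 0 = 0" and Lm: "\<And>g. L (- g) = L g"
    and Ls: "\<And>g h. L (g + h) \<le> L g + L h" using lf unfolding length_function_def by auto
  define c where "c = 1 / p - 1"
  define f where "f S = ereal (ln (rho S) / ln (real (card S)))" for S :: "'a set"
  have key: "(INF S'\<in>{S'. finite_symmetric S' \<and> S0 \<subseteq> S'}. f S') \<le> ereal c"
    if S0: "finite_symmetric S0" for S0
  proof (rule ccontr)
    assume "\<not> ?thesis"
    then have "ereal c < (INF S'\<in>{S'. finite_symmetric S' \<and> S0 \<subseteq> S'}. f S')" by simp
    then obtain r where r1: "ereal c < ereal r" and r2: "ereal r < (INF S'\<in>{S'. finite_symmetric S' \<and> S0 \<subseteq> S'}. f S')"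
      using ereal_dense2 by blast
    have fr: "r < ln (rho S') / ln (real (card S'))" if "finite_symmetric S'" "S0 \<subseteq> S'" for S'
      using less_INF_D[OF r2, of S'] that by (simp add: f_def)
    define \<eta> where "\<eta> = r - c"
    have eta: "\<eta> > 0" using r1 by (simp add: \<eta>_def)
    define T0 where "T0 = S0 \<union> {0}"
    have T0f: "finite T0" using S0 by (simp add: T0_def finite_symmetric_def)
    define d0 where "d0 = Max (L ` T0)"
    have d0: "d0 \<ge> 0" unfolding d0_def using T0f L0 by (intro Max_ge_iff[THEN iffD2]) (auto simp: T0_def)
    have T0d: "L g \<le> d0" if "g \<in> T0" for g unfolding d0_def using T0f that by simp
    define G where "G d = max 2 (\<bar>poly P d\<bar> powr (1 / \<eta>))" for d
    have cardF: "real (card F) \<le> G d" if d: "d \<ge> d0" and F: "finite F" "F \<subseteq> {g. L g \<le> d}" for d F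
    proof -
      define S' where "S' = F \<union> uminus ` F \<union> T0"
      have fS': "finite S'" using F T0f by (simp add: S'_def)
      have symS': "- g \<in> S'" if "g \<in> S'" for g
        using that S0 unfolding S'_def T0_def finite_symmetric_def by auto
      have fsS': "finite_symmetric S'" using fS' symS' by (simp add: finite_symmetric_def)
      have sub0: "S0 \<subseteq> S'" by (auto simp: S'_def T0_def)
      have neS': "S' \<noteq> {}" by (auto simp: S'_def T0_def)
      have subd: "S' \<subseteq> {g. L g \<le> d}" using F T0d d by (auto simp: S'_def Lm intro: order_trans)
      have av: "avg S'" by (rule avgI[OF fsS' neS'])
      have cF: "card F \<le> card S'" using fS' by (intro card_mono) (auto simp: S'_def)
      show ?thesis
      proof (cases "card S' \<le> 1")
        case True then show ?thesis using cF by (simp add: G_def)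
      next
        case False
        define M where "M = real (card S')"
        have M1: "M > 1" using False by (simp add: M_def)
        have lnM: "ln M > 0" using M1 by simp
        have rp: "rho S' > 0" using avg.rho_pos[OF av] .
        have "r < ln (rho S') / ln M" using fr[OF fsS' sub0] by (simp add: M_def)
        then have "r * ln M < ln (rho S')" using lnM by (simp add: less_divide_eq)
        then have "ln (M powr r) < ln (rho S')" using M1 by simp
        then have lo: "M powr r < rho S'" using M1 rp by (subst (asm) ln_less_cancel_iff) auto
        have up: "rho S' \<le> poly P d * M powr c"
          unfolding M_def c_def by (rule rho_RD[OF p rd av _ subd]) (use d d0 in simp)
        have "M powr c * M powr \<eta> = M powr r" by (simp add: \<eta>_def powr_add[symmetric])
        then have "M powr c * M powr \<eta> < poly P d * M powr c" using lo up by simp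
        then have "M powr \<eta> < poly P d" using M1 by (simp add: mult.commute)
        then have "M powr \<eta> < \<bar>poly P d\<bar>" by simp
        then have "(M powr \<eta>) powr (1 / \<eta>) < \<bar>poly P d\<bar> powr (1 / \<eta>)"
          using eta by (intro powr_less_mono2) auto
        then have "M < \<bar>poly P d\<bar> powr (1 / \<eta>)" using eta M1 by (simp add: powr_powr)
        then show ?thesis using cF unfolding G_def M_def by simp
      qed
    qed
    define B where "B d = {g. L g \<le> d}" for d
    have finB: "finite (B d)" for d
    proof -
      have "finite (B d)" if d: "d \<ge> d0" for d
      proof (rule ccontr)
        assume inf: "\<not> finite (B d)"
        obtain n :: nat where n: "real n > G d" using reals_Archimedean2 by blast
        obtain F where F: "finite F" "card F = n" "F \<subseteq> B d"
          using infinite_arbitrarily_large[OF inf] by blast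
        show False using cardF[OF d F(1)] F(2,3) n by (simp add: B_def)
      qed
      moreover have "B d \<subseteq> B (max d d0)" by (auto simp: B_def)
      ultimately show ?thesis by (meson finite_subset max.cobounded2)
    qed
    define A where "A = (\<Sum>i\<le>degree P. \<bar>coeff P i\<bar>)"
    have A: "A \<ge> 0" unfolding A_def by (simp add: sum_nonneg)
    define k where "k = real (degree P) / \<eta>"
    have k: "k \<ge> 0" using eta by (simp add: k_def)
    define C where "C = 2 + A powr (1 / \<eta>)"
    have C: "C > 0" by (simp add: C_def add_pos_nonneg)
    have bd: "real (card (B d)) \<le> C * (1 + d) powr k" if d: "d \<ge> d0" for d
    proof -
      have dn: "d \<ge> 0" using d d0 by simp
      have one: "(1 + d) powr k \<ge> 1" using dn k by (intro ge_one_powr_ge_zero) auto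
      have "\<bar>poly P d\<bar> powr (1 / \<eta>) \<le> (A * (1 + d) ^ degree P) powr (1 / \<eta>)"
        using poly_bound[OF dn, of P] eta by (intro powr_mono2) (auto simp: A_def)
      also have "\<dots> = A powr (1 / \<eta>) * (1 + d) powr k"
        using dn by (simp add: powr_mult powr_realpow[symmetric] powr_powr k_def)
      finally have e1: "\<bar>poly P d\<bar> powr (1 / \<eta>) \<le> A powr (1 / \<eta>) * (1 + d) powr k" .
      have nn: "A powr (1 / \<eta>) * (1 + d) powr k \<ge> 0" by simp
      have "G d \<le> C * (1 + d) powr k"
        unfolding G_def C_def distrib_right
        by (rule max.boundedI) (use e1 one nn in linarith)+
      then show ?thesis using cardF[OF d finB[of d]] by (simp add: B_def)
    qed
    have "amenable TYPE('a)"
      by (rule growth_amenable[of L d0 C k, OF Ls L0 _ _ d0 C k])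
         (use finB bd in \<open>auto simp: B_def\<close>)
    then show False using na by simp
  qed
  have "(SUP S\<in>{S::'a set. finite_symmetric S}. INF S'\<in>{S'. finite_symmetric S' \<and> S \<subseteq> S'}. f S') \<le> ereal (- (1 - 1/p))"
    by (rule SUP_least) (use key in \<open>auto simp: c_def\<close>)
  then show ?thesis unfolding r_exponent_def f_def by (rule ereal_neg_ge)
qed



theorem proposition8p1:
  assumes "\<not> amenable TYPE('a::group_add)"
  shows "(\<forall>p::real. 1 \<le> p \<and> p \<le> 2 \<and> has_RD p TYPE('a) \<longrightarrow>
            r_exponent TYPE('a) \<ge> ereal (1 - 1 / p))
       \<and> (has_RD 2 TYPE('a) \<longrightarrow> r_exponent TYPE('a) = ereal (1 / 2))"
proof (intro conjI allI impI)
  fix p :: real assume "1 \<le> p \<and> p \<le> 2 \<and> has_RD p TYPE('a)"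
  then show "r_exponent TYPE('a) \<ge> ereal (1 - 1 / p)" using part1[OF assms] by blast
next
  assume "has_RD 2 TYPE('a)"
  then have "r_exponent TYPE('a) \<ge> ereal (1 - 1 / 2)" using part1[OF assms, of 2] by simp
  moreover have "r_exponent TYPE('a) \<le> ereal (1 / 2)" by (rule r_upper)
  ultimately show "r_exponent TYPE('a) = ereal (1 / 2)" by simp
qed

end
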